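(* Let $N,Q$ be positive integers, $C=[-1,1)^{2N-1}$, $C_+=[0,1)^{2N-1}$ and $F(x)=(1+\|x\|^2)^{-N}$. For every continuous nonnegative function $\Theta:[-1,1]^{2N-1}\times[0,1]^{2N-1}\to\mathbb{R}$, $$\int_C\Theta(A_Q(x),B_Q(x))F(x)\,\mathrm{d}x\le\exp\!\Big(\frac{2N^{3/2}}{Q}\Big)\int_{C_+}\int_C\Theta(A_Q(x),y)F(x)\,\mathrm{d}x\,\mathrm{d}y.$$
   Context: For $a\in\mathbb{R}$, $A(a)$ is the integral part of $a$ and $A_Q(a)=Q^{-1}A(Qa)$. For $x\in\mathbb{R}^{2N-1}$, $A_Q(x)=(A_Q(x_1),\dots,A_Q(x_{2N-1}))$ and $B_Q(x)=(x-A_Q(x))Q\in[0,1]^{2N-1}$. $\|\cdot\|$ is the Euclidean norm and integrals are with respect to Lebesgue measure. *)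

theory Defs
  imports "HOL-Analysis.Analysis"
begin

definition AQ :: "nat \<Rightarrow> real \<Rightarrow> real" where
  "AQ Q a = real_of_int \<lfloor>real Q * a\<rfloor> / real Q"

definition AQv :: "nat \<Rightarrow> real^'n \<Rightarrow> real^'n" where
  "AQv Q x = (\<chi> i. AQ Q (x $ i))"

definition BQv :: "nat \<Rightarrow> real^'n \<Rightarrow> real^'n" where
  "BQv Q x = real Q *\<^sub>R (x - AQv Q x)"

definition hcube :: "real \<Rightarrow> real \<Rightarrow> (real^'n) set" where
  "hcube a b = {x. \<forall>i. a \<le> x $ i \<and> x $ i < b}"

definition FN :: "nat \<Rightarrow> real^'n \<Rightarrow> real" where
  "FN N x = (1 + (norm x)\<^sup>2) powr (- real N)"

end

theory Submission
  imports Defs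
begin


lemma FN_cont: "continuous_on S (FN N :: real^'n \<Rightarrow> real)" unfolding FN_def
  by (intro continuous_intros) (smt (verit) zero_le_power2)

lemma ln_lip:
  fixes t s :: real assumes "t \<le> s"
  shows "ln (1 + s\<^sup>2) - s \<le> ln (1 + t\<^sup>2) - t"
proof (rule DERIV_nonpos_imp_nonincreasing[OF assms])
  fix x :: real
  have p: "1 + x\<^sup>2 > 0" by (smt (verit) zero_le_power2)
  have "((\<lambda>u. ln (1 + u\<^sup>2) - u) has_real_derivative (2*x/(1+x\<^sup>2) - 1)) (at x)"
    using p by (auto intro!: derivative_eq_intros simp: power2_eq_square)
  moreover have "2*x/(1+x\<^sup>2) - 1 \<le> 0"
  proof -
    have "2*x \<le> 1 + x\<^sup>2" using zero_le_power2[of "x - 1"] by (simp add: power2_diff)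
    then have "2*x/(1+x\<^sup>2) \<le> 1" using p by (simp add: divide_le_eq)
    then show ?thesis by simp
  qed
  ultimately show "\<exists>y. ((\<lambda>u. ln (1 + u\<^sup>2) - u) has_real_derivative y) (at x) \<and> y \<le> 0" by blast
qed

lemma FN_lip:
  fixes x z :: "real^'n"
  shows "FN N x \<le> exp (real N * norm (x - z)) * FN N z"
proof -
  have px: "1 + (norm x)\<^sup>2 > 0" and pz: "1 + (norm z)\<^sup>2 > 0" by (smt (verit) zero_le_power2)+
  have key: "ln (1 + (norm z)\<^sup>2) - ln (1 + (norm x)\<^sup>2) \<le> norm (x - z)"
  proof (cases "norm z \<le> norm x")
    case True
    then have "(norm z)\<^sup>2 \<le> (norm x)\<^sup>2" by (simp add: power_mono)
    then have "ln (1 + (norm z)\<^sup>2) \<le> ln (1 + (norm x)\<^sup>2)" using pz px by (subst ln_le_cancel_iff) auto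
    then show ?thesis by (smt (verit) norm_ge_zero)
  next
    case False
    then have "ln (1 + (norm z)\<^sup>2) - norm z \<le> ln (1 + (norm x)\<^sup>2) - norm x"
      by (intro ln_lip) simp
    moreover have "norm z - norm x \<le> norm (x - z)"
      by (metis norm_minus_commute norm_triangle_ineq2)
    ultimately show ?thesis by linarith
  qed
  have "FN N x = exp (- real N * ln (1 + (norm x)\<^sup>2))" unfolding FN_def powr_def using px by simp
  also have "\<dots> \<le> exp (real N * norm (x - z) + (- real N * ln (1 + (norm z)\<^sup>2)))"
    using mult_left_mono[OF key, of "real N"] by (simp add: algebra_simps)
  also have "\<dots> = exp (real N * norm (x - z)) * FN N z"
    unfolding FN_def powr_def exp_add using pz by simp
  finally show ?thesis .
qed



definition lo :: "nat \<Rightarrow> ('n \<Rightarrow> int) \<Rightarrow> real^'n" where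
  "lo Q k = (\<chi> i. real_of_int (k i) / real Q)"
definition hi :: "nat \<Rightarrow> ('n \<Rightarrow> int) \<Rightarrow> real^'n" where
  "hi Q k = (\<chi> i. (real_of_int (k i) + 1) / real Q)"
definition cen :: "nat \<Rightarrow> ('n \<Rightarrow> int) \<Rightarrow> real^'n" where
  "cen Q k = (\<chi> i. (real_of_int (k i) + 1/2) / real Q)"
definition cell :: "nat \<Rightarrow> ('n \<Rightarrow> int) \<Rightarrow> (real^'n) set" where
  "cell Q k = {x. \<forall>i. \<lfloor>real Q * x $ i\<rfloor> = k i}"
definition Ks :: "nat \<Rightarrow> ('n::finite \<Rightarrow> int) set" where
  "Ks Q = {k. \<forall>i. k i \<in> {-int Q..<int Q}}"

lemma cell_sub: assumes "Q > 0" shows "cell Q k \<subseteq> cbox (lo Q k) (hi Q k)"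
proof
  fix x assume "x \<in> cell Q k"
  then have h: "\<And>i. real_of_int (k i) \<le> real Q * x$i \<and> real Q * x$i < real_of_int (k i) + 1"
    unfolding cell_def by (metis (mono_tags) floor_eq_iff mem_Collect_eq)
  show "x \<in> cbox (lo Q k) (hi Q k)" unfolding mem_box_cart lo_def hi_def
    using h assms by (auto simp: divide_le_eq le_divide_eq mult.commute less_imp_le)
qed

lemma box_sub: assumes "Q > 0" shows "box (lo Q k) (hi Q k) \<subseteq> cell Q k"
proof
  fix x assume "x \<in> box (lo Q k) (hi Q k)"
  then have h: "\<And>i. real_of_int (k i) / Q < x$i \<and> x$i < (real_of_int (k i) + 1) / Q"
    unfolding mem_box_cart lo_def hi_def by auto
  have "\<And>i. real_of_int (k i) \<le> real Q * x$i \<and> real Q * x$i < real_of_int (k i) + 1"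
    using h assms by (auto simp: divide_less_eq less_divide_eq mult.commute less_imp_le)
  then show "x \<in> cell Q k" unfolding cell_def by (simp add: floor_eq_iff)
qed

lemma AQ_cell: "x \<in> cell Q k \<Longrightarrow> AQv Q x = lo Q k"
  unfolding cell_def AQv_def AQ_def lo_def by (simp add: vec_eq_iff)

lemma hcube_eq: assumes "Q > 0" shows "hcube (-1) 1 = (\<Union>k\<in>Ks Q. cell Q k)"
proof (intro equalityI subsetI)
  fix x :: "real^'n" assume "x \<in> hcube (-1) 1"
  then have h: "\<And>i. -1 \<le> x$i \<and> x$i < 1" unfolding hcube_def by auto
  define k where "k = (\<lambda>i. \<lfloor>real Q * x $ i\<rfloor>)"
  have "x \<in> cell Q k" unfolding cell_def k_def by simp
  moreover have "k \<in> Ks Q"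
  proof -
    have "\<And>i. - real Q \<le> real Q * x$i \<and> real Q * x$i < real Q"
      using h assms by (auto simp: mult_less_cancel_left2)
      (metis mult.right_neutral mult_le_cancel_left_pos mult_minus_right of_nat_0_less_iff)
    then show ?thesis unfolding Ks_def k_def
      by (auto simp: le_floor_iff floor_less_iff)
  qed
  ultimately show "x \<in> (\<Union>k\<in>Ks Q. cell Q k)" by blast
next
  fix x :: "real^'n" assume "x \<in> (\<Union>k\<in>Ks Q. cell Q k)"
  then obtain k where k: "k \<in> Ks Q" "x \<in> cell Q k" by blast
  have "\<And>i. - real Q \<le> real Q * x$i \<and> real Q * x$i < real Q"
  proof -
    fix i
    have "\<lfloor>real Q * x $ i\<rfloor> = k i" "- int Q \<le> k i" "k i < int Q"
      using k unfolding cell_def Ks_def by auto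
    then show "- real Q \<le> real Q * x$i \<and> real Q * x$i < real Q"
      by (metis floor_less_iff le_floor_iff of_int_minus of_int_of_nat_eq)
  qed
  then show "x \<in> hcube (-1) 1" unfolding hcube_def using assms
    by (auto simp: mult_less_cancel_left2)
      (metis minus_mult_right mult_le_cancel_left_pos mult.right_neutral of_nat_0_less_iff)
qed

lemma Ks_finite: "finite (Ks Q :: ('n::finite \<Rightarrow> int) set)"
proof -
  have "(Ks Q :: ('n \<Rightarrow> int) set) = PiE UNIV (\<lambda>_. {-int Q..<int Q})" unfolding Ks_def by (auto simp: PiE_iff)
  moreover have "finite (PiE (UNIV::'n set) (\<lambda>_. {-int Q..<int Q}))" by (rule finite_PiE) auto
  ultimately show ?thesis by simp
qed

lemma cells_disj: "pairwise (\<lambda>k k'. negligible (cell Q k \<inter> cell Q k')) (Ks Q)"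
proof -
  have "\<And>k k'. k \<noteq> k' \<Longrightarrow> cell Q k \<inter> cell Q k' = {}"
    unfolding cell_def by auto
  then show ?thesis unfolding pairwise_def by (metis negligible_empty)
qed

lemma has_int_cell:
  fixes f :: "real^'n \<Rightarrow> real"
  assumes "Q > 0" "f integrable_on cbox (lo Q k) (hi Q k)"
  shows "(f has_integral integral (cbox (lo Q k) (hi Q k)) f) (cell Q k)"
proof -
  have "(f has_integral integral (cbox (lo Q k) (hi Q k)) f) (cbox (lo Q k) (hi Q k))"
    using assms by blast
  moreover have "negligible {x \<in> cbox (lo Q k) (hi Q k) - cell Q k. f x \<noteq> 0}"
    by (rule negligible_subset[OF negligible_frontier_interval]) (use box_sub[OF assms(1)] in blast)
  moreover have "negligible {x \<in> cell Q k - cbox (lo Q k) (hi Q k). f x \<noteq> 0}"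
  proof -
    have sub: "cell Q k \<subseteq> cbox (lo Q k) (hi Q k)" by (rule cell_sub[OF assms(1)])
    have "{x \<in> cell Q k - cbox (lo Q k) (hi Q k). f x \<noteq> 0} = {}" using sub by blast
    then show ?thesis by (metis negligible_empty)
  qed
  ultimately show ?thesis using has_integral_spike_set_eq by blast
qed

lemma lo_in: assumes "Q > 0" "k \<in> Ks Q" shows "lo Q k \<in> cbox (-1) 1"
proof -
  have a: "- real Q \<le> real_of_int (k i) \<and> real_of_int (k i) \<le> real Q" for i
  proof -
    have "- int Q \<le> k i" "k i < int Q" using assms(2) unfolding Ks_def by auto
    then have "real_of_int (- int Q) \<le> real_of_int (k i)" "real_of_int (k i) \<le> real_of_int (int Q)"
      by linarith+
    then show ?thesis by simp
  qed
  show ?thesis unfolding mem_box_cart lo_def using a assms(1)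
    by (auto simp: divide_le_eq le_divide_eq)
qed

lemma scale_in: "Q > 0 \<Longrightarrow> x \<in> cbox (lo Q k) (hi Q k) \<Longrightarrow> real Q *\<^sub>R (x - lo Q k) \<in> cbox 0 1"
  unfolding mem_box_cart lo_def hi_def
  by (auto simp: divide_le_eq le_divide_eq algebra_simps)

lemma content_cell: fixes k :: "'n::finite \<Rightarrow> int" shows "Q > 0 \<Longrightarrow> measure lborel (cbox (lo Q k) (hi Q k)) = (1 / real Q) ^ CARD('n)"
proof -
  assume Q: "Q > 0"
  have "lo Q k \<in> cbox (lo Q k) (hi Q k)" unfolding mem_box_cart lo_def hi_def
    using Q by (simp add: divide_right_mono)
  then have ne: "cbox (lo Q k) (hi Q k) \<noteq> {}" by blast
  have "\<And>i. hi Q k $ i - lo Q k $ i = 1 / real Q"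
    by (simp add: lo_def hi_def diff_divide_distrib[symmetric])
  then show ?thesis using content_cbox_cart[OF ne] by simp
qed

lemma dist_cen:
  fixes k :: "'n::finite \<Rightarrow> int"
  assumes "Q > 0" "x \<in> cbox (lo Q k) (hi Q k)"
  shows "norm (x - cen Q k) \<le> sqrt (real CARD('n)) / (2 * real Q)"
proof -
  have c: "\<bar>x$i - cen Q k $ i\<bar> \<le> 1 / (2 * real Q)" for i
  proof -
    have x: "real_of_int (k i) / Q \<le> x$i" "x$i \<le> (real_of_int (k i) + 1) / Q"
      using assms(2) unfolding mem_box_cart lo_def hi_def by auto
    have e1: "(real_of_int (k i) + 1) / Q - (real_of_int (k i) + 1/2) / Q = 1 / (2 * real Q)"
      using assms(1) by (simp add: field_simps)
    have e2: "(real_of_int (k i) + 1/2) / Q - real_of_int (k i) / Q = 1 / (2 * real Q)"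
      using assms(1) by (simp add: field_simps)
    have "cen Q k $ i = (real_of_int (k i) + 1/2) / Q" unfolding cen_def by simp
    then show ?thesis using x e1 e2 by (simp add: abs_le_iff)
  qed
  have "norm (x - cen Q k) = L2_set (\<lambda>i. \<bar>x$i - cen Q k $ i\<bar>) UNIV"
    by (simp add: norm_vec_def)
  also have "\<dots> \<le> L2_set (\<lambda>i. 1 / (2 * real Q)) (UNIV::'n set)"
    using c by (intro L2_set_mono) auto
  also have "\<dots> = sqrt (real CARD('n)) * (1 / (2 * real Q))"
    by (simp add: L2_set_constant)
  also have "\<dots> = sqrt (real CARD('n)) / (2 * real Q)" by simp
  finally show ?thesis .
qed

lemma affine_int:
  fixes h :: "real^'n \<Rightarrow> real"
  assumes Q: "Q > 0" and hi: "h integrable_on cbox 0 1"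
  shows "integral (cbox (lo Q k) (hi Q k)) (\<lambda>x. h (real Q *\<^sub>R (x - lo Q k)))
     = integral (cbox 0 1) h / real Q ^ CARD('n)"
proof -
  have Qp: "real Q > 0" using Q by simp
  have 1: "((\<lambda>x. h (real Q *\<^sub>R x + (- real Q *\<^sub>R lo Q k))) has_integral
      (integral (cbox 0 1) h /\<^sub>R real Q ^ DIM(real^'n)))
      (cbox ((0 - (- real Q *\<^sub>R lo Q k)) /\<^sub>R real Q) ((1 - (- real Q *\<^sub>R lo Q k)) /\<^sub>R real Q))"
    by (rule has_integral_affinity'[OF _ Qp]) (use hi in blast)
  have 2: "(0 - (- real Q *\<^sub>R lo Q k)) /\<^sub>R real Q = lo Q k"
    using Qp by (simp add: vec_eq_iff)
  have 3: "(1 - (- real Q *\<^sub>R lo Q k)) /\<^sub>R real Q = hi Q k"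
    unfolding vec_eq_iff lo_def hi_def using Qp by (simp add: divide_inverse algebra_simps)
  have 4: "(\<lambda>x. h (real Q *\<^sub>R x + (- real Q *\<^sub>R lo Q k))) = (\<lambda>x. h (real Q *\<^sub>R (x - lo Q k)))"
    by (simp add: algebra_simps)
  have "((\<lambda>x. h (real Q *\<^sub>R (x - lo Q k))) has_integral
      (integral (cbox 0 1) h /\<^sub>R real Q ^ CARD('n))) (cbox (lo Q k) (hi Q k))"
    using 1 unfolding 2 3 4 by simp
  then show ?thesis by (simp add: integral_unique divide_inverse_commute)
qed



lemma hcube01: "box 0 1 \<subseteq> hcube 0 (1::real) \<and> hcube 0 1 \<subseteq> cbox 0 (1::real^'n)"
  unfolding hcube_def by (auto simp: subset_iff mem_box_cart less_imp_le)

lemma int_hcube01: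
  fixes h :: "real^'n \<Rightarrow> real"
  assumes "(h has_integral I) (cbox 0 1)"
  shows "(h has_integral I) (hcube 0 1)"
proof -
  have "negligible {x \<in> cbox 0 1 - hcube 0 1. h x \<noteq> 0}"
    by (rule negligible_subset[OF negligible_frontier_interval]) (use hcube01 in blast)
  moreover have "negligible {x \<in> hcube 0 1 - cbox 0 1. h x \<noteq> 0}"
  proof -
    have "{x \<in> hcube 0 1 - cbox 0 1. h x \<noteq> 0} = {}" using hcube01 by blast
    then show ?thesis by (metis negligible_empty)
  qed
  ultimately show ?thesis using has_integral_spike_set_eq assms by blast
qed

theorem lemma2p2:
  fixes N Q :: nat and \<Theta> :: "(real^'n) \<times> (real^'n) \<Rightarrow> real"
  assumes "N > 0" and "Q > 0" and "CARD('n) = 2 * N - 1"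
    and "continuous_on ((cbox (- 1) 1 \<times> cbox 0 (1::real^'n))) \<Theta>"
    and "\<And>z. z \<in> (cbox (- 1) 1 \<times> cbox 0 (1::real^'n)) \<Longrightarrow> \<Theta> z \<ge> 0"
  shows "integral (hcube (-1) 1) (\<lambda>x. \<Theta> (AQv Q x, BQv Q x) * FN N x)
    \<le> exp (2 * real N powr (3/2) / real Q) *
       integral (hcube 0 1) (\<lambda>y. integral (hcube (-1) 1) (\<lambda>x. \<Theta> (AQv Q x, y) * FN N x))"
proof -
  note Q = assms(2) and cont = assms(4) and nn = assms(5)
  define D where "D = (cbox (- 1) 1 \<times> cbox 0 (1::real^'n))"
  define E where "E = exp (2 * real N powr (3/2) / real Q)"
  define E1 where "E1 = exp (real N * (sqrt (real CARD('n)) / (2 * real Q)))"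
  define K where "K = (Ks Q :: ('n \<Rightarrow> int) set)"
  define I where "I = (\<lambda>k::'n\<Rightarrow>int. integral (cbox 0 1) (\<lambda>y. \<Theta> (lo Q k, y)))"
  define G where "G = (\<lambda>k::'n\<Rightarrow>int. integral (cbox (lo Q k) (hi Q k)) (FN N))"
  define L where "L = (\<lambda>k::'n\<Rightarrow>int. integral (cbox (lo Q k) (hi Q k))
                         (\<lambda>x. \<Theta> (lo Q k, real Q *\<^sub>R (x - lo Q k)) * FN N x))"
  have finK: "finite K" unfolding K_def by (rule Ks_finite)
  have hcube_K: "hcube (-1) 1 = (\<Union>k\<in>K. cell Q k)" unfolding K_def by (rule hcube_eq[OF Q])
  have disjK: "pairwise (\<lambda>k k'. negligible (cell Q k \<inter> cell Q k')) K"
    unfolding K_def by (rule cells_disj)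
  have FNi: "FN N integrable_on cbox a b" for a b :: "real^'n"
    by (rule integrable_continuous[OF FN_cont])
  have FNpos: "FN N x > 0" for x :: "real^'n" unfolding FN_def
  proof -
    have "0 < 1 + (norm x)\<^sup>2" by (simp add: add_pos_nonneg)
    then show "0 < (1 + (norm x)\<^sup>2) powr - real N" by simp
  qed
  have loK: "lo Q k \<in> cbox (-1) 1" if "k \<in> K" for k
    using lo_in[OF Q] that unfolding K_def by blast
  have hcont: "continuous_on (cbox 0 1) (\<lambda>y. \<Theta> (lo Q k, y))" if "k \<in> K" for k
  proof (rule continuous_on_compose2[OF cont, of _ "\<lambda>y. (lo Q k, y)"])
    show "continuous_on (cbox 0 1) (\<lambda>y. (lo Q k, y))" by (intro continuous_intros)
    show "(\<lambda>y. (lo Q k, y)) ` cbox 0 1 \<subseteq> cbox (- 1) 1 \<times> cbox 0 1"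
      using loK[OF that] by auto
  qed
  have gcont: "continuous_on (cbox (lo Q k) (hi Q k)) (\<lambda>x. \<Theta> (lo Q k, real Q *\<^sub>R (x - lo Q k)))"
    if "k \<in> K" for k
  proof (rule continuous_on_compose2[OF cont, of _ "\<lambda>x. (lo Q k, real Q *\<^sub>R (x - lo Q k))"])
    show "continuous_on (cbox (lo Q k) (hi Q k)) (\<lambda>x. (lo Q k, real Q *\<^sub>R (x - lo Q k)))"
      by (intro continuous_intros)
    show "(\<lambda>x. (lo Q k, real Q *\<^sub>R (x - lo Q k))) ` cbox (lo Q k) (hi Q k) \<subseteq> cbox (- 1) 1 \<times> cbox 0 1"
      using loK[OF that] scale_in[OF Q] by auto
  qed
  have gnn: "\<Theta> (lo Q k, real Q *\<^sub>R (x - lo Q k)) \<ge> 0" if "k \<in> K" "x \<in> cbox (lo Q k) (hi Q k)" for k x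
  proof -
    have "lo Q k \<in> cbox (-1) 1" using loK that by blast
    moreover have "real Q *\<^sub>R (x - lo Q k) \<in> cbox 0 1" using scale_in[OF Q] that(2) by blast
    ultimately show ?thesis using nn[of "(lo Q k, real Q *\<^sub>R (x - lo Q k))"] by auto
  qed
  have hnn: "\<Theta> (lo Q k, y) \<ge> 0" if "k \<in> K" "y \<in> cbox 0 1" for k y
    using nn[of "(lo Q k, y)"] loK[OF that(1)] that(2) by auto
  have LHS: "integral (hcube (-1) 1) (\<lambda>x. \<Theta> (AQv Q x, BQv Q x) * FN N x) = (\<Sum>k\<in>K. L k)"
  proof -
    have "((\<lambda>x. \<Theta> (AQv Q x, BQv Q x) * FN N x) has_integral (\<Sum>k\<in>K. L k)) (\<Union>k\<in>K. cell Q k)"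
    proof (rule has_integral_UN[OF finK _ disjK])
      fix k assume k: "k \<in> K"
      have "(\<lambda>x. \<Theta> (lo Q k, real Q *\<^sub>R (x - lo Q k)) * FN N x) integrable_on cbox (lo Q k) (hi Q k)"
        by (intro integrable_continuous continuous_on_mult gcont[OF k] FN_cont)
      then have "((\<lambda>x. \<Theta> (lo Q k, real Q *\<^sub>R (x - lo Q k)) * FN N x) has_integral L k) (cell Q k)"
        unfolding L_def by (rule has_int_cell[OF Q])
      then show "((\<lambda>x. \<Theta> (AQv Q x, BQv Q x) * FN N x) has_integral L k) (cell Q k)"
        by (rule has_integral_eq[rotated]) (simp add: AQ_cell BQv_def)
    qed
    then show ?thesis unfolding hcube_K by (rule integral_unique)
  qed
  have inner: "integral (hcube (-1) 1) (\<lambda>x. \<Theta> (AQv Q x, y) * FN N x) = (\<Sum>k\<in>K. \<Theta> (lo Q k, y) * G k)" for y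
  proof -
    have "((\<lambda>x. \<Theta> (AQv Q x, y) * FN N x) has_integral (\<Sum>k\<in>K. \<Theta> (lo Q k, y) * G k)) (\<Union>k\<in>K. cell Q k)"
    proof (rule has_integral_UN[OF finK _ disjK])
      fix k assume k: "k \<in> K"
      have "(FN N has_integral G k) (cell Q k)" unfolding G_def by (rule has_int_cell[OF Q FNi])
      then have "((\<lambda>x. \<Theta> (lo Q k, y) * FN N x) has_integral \<Theta> (lo Q k, y) * G k) (cell Q k)"
        by (rule has_integral_mult_right)
      then show "((\<lambda>x. \<Theta> (AQv Q x, y) * FN N x) has_integral \<Theta> (lo Q k, y) * G k) (cell Q k)"
        by (rule has_integral_eq[rotated]) (simp add: AQ_cell)
    qed
    then show ?thesis unfolding hcube_K by (rule integral_unique)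
  qed
  have RHS: "integral (hcube 0 1) (\<lambda>y. integral (hcube (-1) 1) (\<lambda>x. \<Theta> (AQv Q x, y) * FN N x))
      = (\<Sum>k\<in>K. I k * G k)"
  proof -
    have "((\<lambda>y. \<Sum>k\<in>K. \<Theta> (lo Q k, y) * G k) has_integral (\<Sum>k\<in>K. I k * G k)) (hcube 0 1)"
    proof (rule has_integral_sum[OF finK])
      fix k assume k: "k \<in> K"
      have "((\<lambda>y. \<Theta> (lo Q k, y)) has_integral I k) (cbox 0 1)"
        unfolding I_def using integrable_continuous[OF hcont[OF k]] by blast
      then show "((\<lambda>y. \<Theta> (lo Q k, y) * G k) has_integral I k * G k) (hcube 0 1)"
        by (intro has_integral_mult_left int_hcube01)
    qed
    then show ?thesis unfolding inner by (rule integral_unique)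
  qed
  have exp_le: "E1 * E1 \<le> E"
  proof -
    have n: "real CARD('n) \<le> 4 * real N" using assms(3) by simp
    have "sqrt (real CARD('n)) \<le> sqrt (4 * real N)" using n by simp
    also have "\<dots> = 2 * sqrt (real N)" by (simp add: real_sqrt_mult)
    finally have s: "sqrt (real CARD('n)) \<le> 2 * sqrt (real N)" .
    have p: "real N powr (3/2) = real N * sqrt (real N)"
    proof -
      have "real N powr (3/2) = real N powr (1 + 1/2)" by simp
      also have "\<dots> = real N powr 1 * real N powr (1/2)" by (rule powr_add)
      also have "\<dots> = real N * sqrt (real N)" using assms(1) by (simp add: powr_half_sqrt)
      finally show ?thesis .
    qed
    have "real N * (sqrt (real CARD('n)) / (2 * real Q)) + real N * (sqrt (real CARD('n)) / (2 * real Q))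
        = real N * sqrt (real CARD('n)) / real Q" by (simp add: field_simps)
    also have "\<dots> \<le> real N * (2 * sqrt (real N)) / real Q"
      using s by (intro divide_right_mono mult_left_mono) auto
    also have "\<dots> = 2 * real N powr (3/2) / real Q" unfolding p by simp
    finally show ?thesis unfolding E1_def E_def exp_add[symmetric] by simp
  qed
  have cellest: "L k \<le> E * (I k * G k)" if k: "k \<in> K" for k
  proof -
    let ?c = "cen Q k"
    let ?g = "\<lambda>x. \<Theta> (lo Q k, real Q *\<^sub>R (x - lo Q k))"
    have E1pos: "E1 > 0" unfolding E1_def by simp
    have near: "exp (real N * norm (x - ?c)) \<le> E1" if "x \<in> cbox (lo Q k) (hi Q k)" for x
      unfolding E1_def using mult_left_mono[OF dist_cen[OF Q that], of "real N"] by simp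
    have gi: "?g integrable_on cbox (lo Q k) (hi Q k)" by (rule integrable_continuous[OF gcont[OF k]])
    have hi: "(\<lambda>y. \<Theta> (lo Q k, y)) integrable_on cbox 0 1" by (rule integrable_continuous[OF hcont[OF k]])
    have "L k \<le> integral (cbox (lo Q k) (hi Q k)) (\<lambda>x. ?g x * (E1 * FN N ?c))"
      unfolding L_def
    proof (rule integral_le)
      show "(\<lambda>x. ?g x * FN N x) integrable_on cbox (lo Q k) (hi Q k)"
        by (intro integrable_continuous continuous_on_mult gcont[OF k] FN_cont)
      show "(\<lambda>x. ?g x * (E1 * FN N ?c)) integrable_on cbox (lo Q k) (hi Q k)"
        by (intro integrable_continuous continuous_on_mult gcont[OF k] continuous_on_const)
      fix x assume x: "x \<in> cbox (lo Q k) (hi Q k)"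
      have "FN N x \<le> exp (real N * norm (x - ?c)) * FN N ?c" by (rule FN_lip)
      also have "\<dots> \<le> E1 * FN N ?c" using near[OF x] FNpos[of ?c] by (simp add: mult_right_mono)
      finally show "?g x * FN N x \<le> ?g x * (E1 * FN N ?c)"
        using gnn[OF k x] by (rule mult_left_mono)
    qed
    also have "\<dots> = integral (cbox (lo Q k) (hi Q k)) ?g * (E1 * FN N ?c)"
      using gi by simp
    also have "\<dots> = I k / real Q ^ CARD('n) * (E1 * FN N ?c)"
      unfolding I_def by (simp only: affine_int[OF Q hi])
    finally have L1: "L k \<le> I k / real Q ^ CARD('n) * (E1 * FN N ?c)" .
    have "integral (cbox (lo Q k) (hi Q k)) (\<lambda>x. FN N ?c / E1) \<le> G k"
      unfolding G_def
    proof (rule integral_le)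
      show "(\<lambda>x. FN N ?c / E1) integrable_on cbox (lo Q k) (hi Q k)" by (rule integrable_const)
      show "FN N integrable_on cbox (lo Q k) (hi Q k)" by (rule FNi)
      fix x assume x: "x \<in> cbox (lo Q k) (hi Q k)"
      have "FN N ?c \<le> exp (real N * norm (?c - x)) * FN N x" by (rule FN_lip)
      also have "\<dots> \<le> E1 * FN N x" using near[OF x] FNpos[of x]
        by (simp add: mult_right_mono norm_minus_commute)
      finally show "FN N ?c / E1 \<le> FN N x" using E1pos by (simp add: divide_le_eq mult.commute)
    qed
    then have G1: "(1 / real Q) ^ CARD('n) * (FN N ?c / E1) \<le> G k"
      using content_cell[OF Q, of k] by simp
    have Ik: "I k \<ge> 0" unfolding I_def using hnn[OF k] by (intro integral_nonneg hi) auto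
    have "I k / real Q ^ CARD('n) * (E1 * FN N ?c)
        = (E1 * E1) * (I k * ((1 / real Q) ^ CARD('n) * (FN N ?c / E1)))"
      using E1pos by (simp add: field_simps power_divide)
    also have "\<dots> \<le> E * (I k * G k)"
    proof -
      have a: "I k * ((1 / real Q) ^ CARD('n) * (FN N ?c / E1)) \<le> I k * G k"
        by (rule mult_left_mono[OF G1 Ik])
      have b: "0 \<le> I k * ((1 / real Q) ^ CARD('n) * (FN N ?c / E1))"
        using Ik FNpos[of ?c] E1pos by simp
      have c: "0 \<le> E" unfolding E_def by simp
      show ?thesis by (rule mult_mono[OF exp_le a c b])
    qed
    finally show ?thesis using L1 by linarith
  qed
  have "(\<Sum>k\<in>K. L k) \<le> (\<Sum>k\<in>K. E * (I k * G k))" using cellest by (rule sum_mono)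
  also have "\<dots> = E * (\<Sum>k\<in>K. I k * G k)" by (simp add: sum_distrib_left)
  finally show ?thesis unfolding LHS RHS E_def .
qed

end
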